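(* Let $x_s<x_t$ be integers, let $C\ge 0$, and let $f:[x_s,x_t]\to\mathbb{R}$ be such that $([x_s,x_t],f)$ is an Ameso($C$) pair. If there exist $x'\in[x_s,x_t]$ and $z\in(x',x_t]$ with $f(z)-f(x')\ge C$, then $\min_{y\in[x_s,z]}f(y)=\min_{y\in[x_s,x_t]}f(y)$.
   Context: For integers $a\le b$, $[a,b]$ denotes the set of integers $\{a,\dots,b\}$ and $(a,b]$ the set $\{a+1,\dots,b\}$. Floors and ceilings of vectors are taken componentwise. A set $D^n\subseteq\mathbb{Z}^n$ is an Ameso set if $\lceil(\vec x+\vec y)/2\rceil,\lfloor(\vec x+\vec y)/2\rfloor\in D^n$ for all $\vec x,\vec y\in D^n$. For $C\ge 0$, $(D^n,f)$ is an Ameso($C$) pair if $D^n$ is an Ameso set, $f:D^n\to\mathbb{R}$ is bounded below, and $f(\vec x)+f(\vec y)+C\ge f(\lceil(\vec x+\vec y)/2\rceil)+f(\lfloor(\vec x+\vec y)/2\rfloor)$ for all $\vec x,\vec y\in D^n$. *)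

theory Defs
  imports Main Complex_Main
begin

definition mid_ceil :: "int \<Rightarrow> int \<Rightarrow> int" where
  "mid_ceil x y = \<lceil>(real_of_int x + real_of_int y) / 2\<rceil>"

definition mid_floor :: "int \<Rightarrow> int \<Rightarrow> int" where
  "mid_floor x y = \<lfloor>(real_of_int x + real_of_int y) / 2\<rfloor>"

definition ameso_set :: "int set \<Rightarrow> bool" where
  "ameso_set D \<longleftrightarrow> (\<forall>x\<in>D. \<forall>y\<in>D. mid_ceil x y \<in> D \<and> mid_floor x y \<in> D)"

definition ameso_pair :: "real \<Rightarrow> int set \<Rightarrow> (int \<Rightarrow> real) \<Rightarrow> bool" where
  "ameso_pair C D f \<longleftrightarrow> C \<ge> 0 \<and> ameso_set D \<and> bdd_below (f ` D) \<and>
     (\<forall>x\<in>D. \<forall>y\<in>D. f x + f y + C \<ge> f (mid_ceil x y) + f (mid_floor x y))"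

end

theory Submission
  imports Defs
begin

lemma mid_sym: "mid_ceil (z-k) (z+k) = z" "mid_floor (z-k) (z+k) = z"
proof -
  have "(real_of_int (z-k) + real_of_int (z+k)) / 2 = real_of_int z" by simp
  then show "mid_ceil (z-k) (z+k) = z" "mid_floor (z-k) (z+k) = z"
    unfolding mid_ceil_def mid_floor_def by simp_all
qed

lemma no_peak:
  fixes f :: "int \<Rightarrow> real"
  assumes amp: "\<forall>x\<in>D. \<forall>y\<in>D. f x + f y + C \<ge> f (mid_ceil x y) + f (mid_floor x y)"
    and C: "C \<ge> 0" and D: "{a..y} \<subseteq> D" and az: "a < z" and zy: "z < y"
    and h1: "f z - f a \<ge> C" and h2: "f z - f y > C"
  shows False
proof -
  define S where "S = {a<..<y}"
  have finS: "finite S" and zS: "z \<in> S" using az zy by (auto simp: S_def)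
  define M where "M = Max (f ` S)"
  have fle: "\<And>x. x \<in> S \<Longrightarrow> f x \<le> M" using finS by (simp add: M_def)
  have MS: "M \<in> f ` S" using finS zS unfolding M_def by (intro Max_in) auto
  define T where "T = {x\<in>S. f x = M}"
  have finT: "finite T" using finS by (simp add: T_def)
  have Tne: "T \<noteq> {}" using MS by (auto simp: T_def)
  define z0 where "z0 = Max T"
  have z0T: "z0 \<in> T" using finT Tne by (simp add: z0_def)
  have z0S: "z0 \<in> S" and fz0: "f z0 = M" using z0T by (auto simp: T_def)
  have rightmost: "\<And>x. x \<in> S \<Longrightarrow> f x = M \<Longrightarrow> x \<le> z0"
    using finT by (auto simp: z0_def T_def)
  have fzM: "f z \<le> M" using fle zS .
  have az0: "a < z0" and z0y: "z0 < y" using z0S by (auto simp: S_def)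
  show False
  proof (cases "z0 - a < y - z0")
    case True
    define d where "d = z0 - a"
    define w where "w = z0 + d"
    have wS: "w \<in> S" using True az0 by (auto simp: S_def w_def d_def)
    have aD: "a \<in> D" and wD: "w \<in> D" using D wS az0 z0y by (auto simp: S_def)
    have "f a + f w + C \<ge> f (mid_ceil a w) + f (mid_floor a w)" using amp aD wD by blast
    moreover have "a = z0 - d" by (simp add: d_def)
    ultimately have "f a + f w + C \<ge> 2 * M" using mid_sym[of z0 d] fz0 by (simp add: w_def)
    then have "f w \<ge> M" using h1 fzM by linarith
    then have "f w = M" using fle wS by force
    then have "w \<le> z0" using rightmost wS by blast
    then show False using az0 by (simp add: w_def d_def)
  next
    case False
    define e where "e = y - z0"
    define w where "w = z0 - e"
    have wa: "a \<le> w" and wz0: "w < z0" using False z0y by (auto simp: w_def e_def)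
    have yD: "y \<in> D" and wD: "w \<in> D" using D wa wz0 az0 z0y by auto
    have "f w + f y + C \<ge> f (mid_ceil w y) + f (mid_floor w y)" using amp yD wD by blast
    moreover have "y = z0 + e" by (simp add: e_def)
    ultimately have "f w + f y + C \<ge> 2 * M" using mid_sym[of z0 e] fz0 by (simp add: w_def)
    then have fw: "f w > M" using h2 fzM C by linarith
    show False
    proof (cases "w = a")
      case True
      then show False using fw h1 fzM C by simp
    next
      case False
      then have "w \<in> S" using wa wz0 z0y by (auto simp: S_def)
      then show False using fle fw by force
    qed
  qed
qed

theorem corollary2:
  fixes xs xt :: int and C :: real and f :: "int \<Rightarrow> real" and x' z :: int
  assumes "xs < xt" and "C \<ge> 0"
    and "ameso_pair C {xs..xt} f"
    and "x' \<in> {xs..xt}" and "z \<in> {x'<..xt}" and "f z - f x' \<ge> C"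
  shows "Min (f ` {xs..z}) = Min (f ` {xs..xt})"
proof -
  have amp: "\<forall>x\<in>{xs..xt}. \<forall>y\<in>{xs..xt}. f x + f y + C \<ge> f (mid_ceil x y) + f (mid_floor x y)"
    using assms(3) by (simp add: ameso_pair_def)
  have xz: "x' < z" "z \<le> xt" "xs \<le> x'" using assms(4,5) by auto
  have big: "f y \<ge> f x'" if "y \<in> {z<..xt}" for y
  proof (rule ccontr)
    assume "\<not> f y \<ge> f x'"
    then have "f z - f y > C" using assms(6) by linarith
    then show False
      using no_peak[OF amp assms(2) _ xz(1) _ assms(6)] that xz by auto
  qed
  have sub: "{xs..z} \<subseteq> {xs..xt}" using xz by auto
  have x'in: "x' \<in> {xs..z}" using xz by auto
  have le1: "Min (f ` {xs..xt}) \<le> Min (f ` {xs..z})"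
    using sub x'in by (intro Min_antimono) auto
  obtain m where m: "m \<in> {xs..xt}" "f m = Min (f ` {xs..xt})"
    using Min_in[of "f ` {xs..xt}"] assms(1) by fastforce
  have le2: "Min (f ` {xs..z}) \<le> f m"
  proof (cases "m \<le> z")
    case True
    then have "f m \<in> f ` {xs..z}" using m(1) by auto
    then show ?thesis by (intro Min_le) auto
  next
    case False
    then have "m \<in> {z<..xt}" using m(1) by auto
    then have "f m \<ge> f x'" by (rule big)
    moreover have "Min (f ` {xs..z}) \<le> f x'" using x'in by (intro Min_le) auto
    ultimately show ?thesis by linarith
  qed
  show ?thesis using le1 le2 m(2) by linarith
qed

end
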